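(* Let $q$ be a prime power, $n\ge2$, and let $r_1,r_2$ be positive divisors of $n$ with $\gcd(r_1,r_2)=1$. Let $\alpha=ab$ with $a\in\mathbb{F}_{q^{r_1}}^*$ and $b\in\mathbb{F}_{q^{r_2}}^*$, and consider in $\mathrm{PG}(1,q^n)$ \[L_{r_1}=\{\langle (x,\mathrm{Tr}_{q^n/q^{r_1}}(x))\rangle_{\mathbb{F}_{q^n}}\colon x\in\mathbb{F}_{q^n}^*\},\qquad L_{r_2}=\{\langle (x,\alpha\,\mathrm{Tr}_{q^n/q^{r_2}}(x))\rangle_{\mathbb{F}_{q^n}}\colon x\in\mathbb{F}_{q^n}^*\},\] with common head $H=\langle(1,0)\rangle_{\mathbb{F}_{q^n}}$. Then $L_{r_1}$ and $L_{r_2}$ share at least one point other than $H$ if and only if there exist $\gamma_1,\gamma_2\in\mathbb{F}_{q^n}$ such that $\mathrm{Tr}_{q^n/q^{r_1}}(\gamma_1)=\mathrm{Tr}_{q^n/q^{r_2}}(\gamma_2)=1$ and $\mathrm{Tr}_{q^n/q}\!\left(a\gamma_1-\frac{\gamma_2}{b}\right)=0$.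
   Context: For a divisor $r$ of $n$, $\mathrm{Tr}_{q^n/q^r}(x)=\sum_{i=0}^{n/r-1}x^{q^{ir}}$. *)

theory Defs
  imports "HOL-Computational_Algebra.Primes"
begin

text \<open>The ambient field is a finite field type 'a with CARD('a) = q^n, i.e. F_{q^n}.
  The subfield F_{q^r} (r dividing n) is the set of fixed points of x |-> x^(q^r).\<close>

definition subfield_pow :: "nat \<Rightarrow> nat \<Rightarrow> ('a::{field,finite}) set" where
  "subfield_pow q r = {x. x ^ (q ^ r) = x}"

definition trace_rel :: "nat \<Rightarrow> nat \<Rightarrow> nat \<Rightarrow> 'a::{field,finite} \<Rightarrow> 'a" where
  "trace_rel q n r x = (\<Sum>i<n div r. x ^ (q ^ (i * r)))"

text \<open>The point of PG(1,q^n) spanned by a nonzero vector (u,v): its set of nonzero multiples.\<close>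

definition proj_pt :: "'a::field \<times> 'a \<Rightarrow> ('a \<times> 'a) set" where
  "proj_pt w = {(c * fst w, c * snd w) | c. c \<noteq> 0}"

definition prime_power :: "nat \<Rightarrow> bool" where
  "prime_power q \<longleftrightarrow> (\<exists>p k. prime p \<and> k > 0 \<and> q = p ^ k)"

end

theory Submission
  imports Defs "HOL-Computational_Algebra.Polynomial" "HOL-Number_Theory.Residues"
begin


lemma frob_add_pow:
  fixes x y :: "'a::{field,finite}"
  assumes H: "\<And>x y::'a. (x+y)^q = x^q + y^q"
  shows "(x+y)^(q^k) = x^(q^k) + y^(q^k)"
proof (induction k arbitrary: x y)
  case 0 then show ?case by simp
next
  case (Suc k)
  have "(x+y)^(q^Suc k) = ((x+y)^(q^k))^q" by (simp only: power_Suc2 power_mult)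
  also have "\<dots> = (x^(q^k))^q + (y^(q^k))^q" by (simp only: Suc.IH H)
  also have "\<dots> = x^(q^Suc k) + y^(q^Suc k)" by (simp only: power_Suc2 power_mult)
  finally show ?case .
qed

lemma frob_sum_pow:
  fixes f :: "'b \<Rightarrow> 'a::{field,finite}"
  assumes H: "\<And>x y::'a. (x+y)^q = x^q + y^q" and q: "q > 0"
  shows "(sum f A)^(q^k) = (\<Sum>i\<in>A. f i ^ (q^k))"
proof (induction A rule: infinite_finite_induct)
  case (insert x F) then show ?case by (simp add: frob_add_pow[OF H])
qed (use q in auto)

lemma frob_diff_pow:
  fixes x y :: "'a::{field,finite}"
  assumes H: "\<And>x y::'a. (x+y)^q = x^q + y^q"
  shows "(x-y)^(q^k) = x^(q^k) - y^(q^k)"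
proof -
  have "x^(q^k) = (x-y)^(q^k) + y^(q^k)" using frob_add_pow[OF H, of "x-y" y k] by simp
  then show ?thesis by (simp add: eq_diff_eq)
qed

lemma pow_pow: "((x::'a::monoid_mult)^(q^a))^(q^b) = x^(q^(a+b))"
  by (simp add: power_mult power_add)

lemma sum_shift_cyc:
  fixes g :: "nat \<Rightarrow> 'a::cancel_comm_monoid_add"
  assumes "g m = g 0"
  shows "(\<Sum>i<m. g (Suc i)) = (\<Sum>i<m. g i)"
proof -
  have "(\<Sum>i<Suc m. g i) = g 0 + (\<Sum>i<m. g (Suc i))" by (rule sum.lessThan_Suc_shift)
  moreover have "(\<Sum>i<Suc m. g i) = (\<Sum>i<m. g i) + g m" by simp
  ultimately show ?thesis using assms by (metis add.commute add_left_cancel)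
qed

context
  fixes q n :: nat
  assumes H: "\<And>x y::'a::{field,finite}. (x+y)^q = x^q + y^q"
    and Hfix: "\<And>x::'a. x^(q^n) = x"
    and q: "q > 0"
begin

lemma tr_frob:
  fixes x :: 'a
  assumes r: "r dvd n" "r > 0"
  shows "trace_rel q n r (x^(q^r)) = trace_rel q n r x"
proof -
  let ?m = "n div r"
  have mr: "?m * r = n" using r by simp
  have "trace_rel q n r (x^(q^r)) = (\<Sum>i<?m. x ^ (q^(Suc i * r)))"
    unfolding trace_rel_def by (intro sum.cong refl) (simp add: pow_pow add.commute)
  also have "\<dots> = (\<Sum>i<?m. x ^ (q^(i * r)))"
    by (rule sum_shift_cyc[where g="\<lambda>i. x ^ (q^(i * r))"]) (simp add: mr Hfix)
  finally show ?thesis unfolding trace_rel_def .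
qed

lemma tr_in_sub:
  fixes x :: 'a
  assumes r: "r dvd n" "r > 0"
  shows "trace_rel q n r x ^ (q^r) = trace_rel q n r x"
proof -
  have "trace_rel q n r x ^ (q^r) = (\<Sum>i<n div r. (x ^ (q ^ (i * r)))^(q^r))"
    unfolding trace_rel_def by (rule frob_sum_pow[OF H q])
  also have "\<dots> = trace_rel q n r (x^(q^r))"
    unfolding trace_rel_def by (intro sum.cong refl) (simp add: pow_pow add.commute)
  finally show ?thesis using tr_frob[OF r] by simp
qed

lemma tr_add: "trace_rel q n r (x + y) = trace_rel q n r x + trace_rel q n r (y::'a)"
  unfolding trace_rel_def by (simp add: frob_add_pow[OF H] sum.distrib)

lemma tr_diff: "trace_rel q n r (x - y) = trace_rel q n r x - trace_rel q n r (y::'a)"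
  unfolding trace_rel_def by (simp add: frob_diff_pow[OF H] sum_subtractf)

lemma tr_zero: "trace_rel q n r (0::'a) = 0"
  using tr_diff[where x=0 and y=0 and r=r] by simp

lemma sub_pow_fix:
  fixes l :: 'a
  assumes "l^(q^r) = l"
  shows "l^(q^(i*r)) = l"
proof (induction i)
  case (Suc i)
  have "l^(q^(Suc i*r)) = (l^(q^(i*r)))^(q^r)" by (simp add: pow_pow add.commute)
  then show ?case using Suc assms by simp
qed simp

lemma tr_scale:
  fixes l x :: 'a
  assumes "l^(q^r) = l"
  shows "trace_rel q n r (l * x) = l * trace_rel q n r x"
  unfolding trace_rel_def by (simp add: power_mult_distrib sub_pow_fix[OF assms] sum_distrib_left)

lemma tr_frob_iter:
  fixes x :: 'a
  assumes r: "r dvd n" "r > 0"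
  shows "trace_rel q n r (x^(q^(s*r))) = trace_rel q n r x"
proof (induction s)
  case (Suc s)
  have "x^(q^(Suc s*r)) = (x^(q^(s*r)))^(q^r)" by (simp add: pow_pow add.commute)
  then show ?case using Suc tr_frob[OF r] by simp
qed simp

end



lemma card_fibres_le:
  fixes f :: "'a::finite \<Rightarrow> 'b"
  assumes "\<And>y. card (f -` {y}) \<le> K"
  shows "card (UNIV::'a set) \<le> card (f ` UNIV) * K"
proof -
  have "UNIV = (\<Union>y\<in>f ` UNIV. f -` {y})" by auto
  then have "card (UNIV::'a set) = card (\<Union>y\<in>f ` UNIV. f -` {y})" by simp
  also have "\<dots> \<le> (\<Sum>y\<in>f ` UNIV. card (f -` {y}))" by (rule card_UN_le) simp
  also have "\<dots> \<le> card (f ` UNIV) * K" using sum_bounded_above[of "f ` UNIV" "\<lambda>y. card (f -` {y})" K] assms by simp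
  finally show ?thesis .
qed

lemma roots_xq_card:
  assumes "q \<ge> 2"
  shows "card {w::'a::{field,finite}. w^q = w} \<le> q"
proof -
  define p :: "'a poly" where "p = Polynomial.monom 1 q + [:0,-1:]"
  have dp: "degree p = q" unfolding p_def using assms
    by (subst degree_add_eq_left) (auto simp: degree_monom_eq)
  have "p \<noteq> 0" using dp assms by auto
  moreover have "{w. w^q = w} = {x. poly p x = 0}" unfolding p_def by (auto simp: poly_monom algebra_simps)
  ultimately show ?thesis using card_poly_roots_bound[of p] dp by simp
qed

lemma roots_tr_card:
  assumes "q \<ge> 2" "n \<ge> 1"
  shows "card {w::'a::{field,finite}. (\<Sum>i<n. w^(q^i)) = 0} \<le> q^(n-1)"
proof -
  define p :: "'a poly" where "p = (\<Sum>i<n. Polynomial.monom 1 (q^i))"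
  have d: "degree p \<le> q^(n-1)" unfolding p_def
  proof (rule degree_sum_le)
    fix i assume "i \<in> {..<n}"
    then have "q^i \<le> q^(n-1)" using assms by (intro power_increasing) auto
    then show "degree (Polynomial.monom (1::'a) (q^i)) \<le> q^(n-1)" by (simp add: degree_monom_eq)
  qed simp
  have inj: "q^i = q^(n-1) \<longleftrightarrow> i = n-1" for i using assms by (intro power_inject_exp) auto
  have "Polynomial.coeff p (q^(n-1)) = (\<Sum>i<n. if i = n-1 then 1 else 0)"
    unfolding p_def coeff_sum by (intro sum.cong refl) (simp only: coeff_monom inj)
  also have "\<dots> = 1" using assms by simp
  finally have "p \<noteq> 0" by auto
  moreover have "{w. (\<Sum>i<n. w^(q^i)) = 0} = {x. poly p x = 0}" unfolding p_def by (simp add: poly_sum poly_monom)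
  ultimately show ?thesis using card_poly_roots_bound[of p] d by simp
qed

context
  fixes q n :: nat
  assumes H: "\<And>x y::'a::{field,finite}. (x+y)^q = x^q + y^q"
    and Hfix: "\<And>x::'a. x^(q^n) = x"
    and q2: "q \<ge> 2" and n1: "n \<ge> 1"
    and card: "card (UNIV::'a set) = q^n"
begin

lemma hilbert90:
  fixes z :: 'a
  assumes "trace_rel q n 1 z = 0"
  shows "\<exists>w. z = w^q - w"
proof -
  define f where "f = (\<lambda>w::'a. w^q - w)"
  define K where "K = {z::'a. trace_rel q n 1 z = 0}"
  have q: "q > 0" using q2 by simp
  have fdiff: "f x - f y = f (x - y)" for x y
  proof -
    have "(x-y)^q = x^q - y^q" using frob_diff_pow[OF H, of x y 1] by simp
    then show ?thesis unfolding f_def by (simp add: algebra_simps)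
  qed
  have sub: "f ` UNIV \<subseteq> K"
  proof
    fix z assume "z \<in> f ` UNIV"
    then obtain w where w: "z = f w" by auto
    have "trace_rel q n 1 (w^(q^1)) = trace_rel q n 1 w"
      by (rule tr_frob[OF H Hfix q]) auto
    then show "z \<in> K" unfolding K_def w f_def using tr_diff[OF H Hfix q, where r=1 and x="w^q" and y=w] by simp
  qed
  have fib: "card (f -` {y}) \<le> q" for y
  proof (cases "y \<in> f ` UNIV")
    case True
    then obtain w0 where y: "y = f w0" by auto
    have "f -` {y} \<subseteq> (\<lambda>k. w0 + k) ` {w. w^q = w}"
    proof
      fix x assume "x \<in> f -` {y}"
      then have "f (x - w0) = 0" using fdiff[of x w0] y by simp
      then have "(x - w0)^q = x - w0" unfolding f_def by simp
      then show "x \<in> (\<lambda>k. w0 + k) ` {w. w^q = w}" by (intro image_eqI[of _ _ "x - w0"]) auto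
    qed
    then have "card (f -` {y}) \<le> card ((\<lambda>k. w0 + k) ` {w::'a. w^q = w})" by (intro card_mono) auto
    also have "\<dots> \<le> card {w::'a. w^q = w}" by (rule card_image_le) simp
    also have "\<dots> \<le> q" by (rule roots_xq_card[OF q2])
    finally show ?thesis .
  next
    case False then have "f -` {y} = {}" by auto
    then show ?thesis by simp
  qed
  have c1: "q^n \<le> card (f ` UNIV) * q" using card_fibres_le[of f q, OF fib] card by simp
  have "K = {w. (\<Sum>i<n. w^(q^i)) = 0}" unfolding K_def trace_rel_def by simp
  then have c2: "card K \<le> q^(n-1)" using roots_tr_card[OF q2 n1] by simp
  obtain m where m: "n = Suc m" using n1 by (cases n) auto
  have "q^(n-1) * q \<le> card (f ` UNIV) * q" using c1 unfolding m by (simp add: mult.commute)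
  then have "q^(n-1) \<le> card (f ` UNIV)" using q by simp
  then have "card K \<le> card (f ` UNIV)" using c2 by simp
  then have "f ` UNIV = K" using sub card_mono[of K "f ` UNIV"] by (intro card_subset_eq) auto
  then show ?thesis using assms unfolding K_def f_def by auto
qed

end



lemma field_pow_card:
  fixes x :: "'a :: {field,finite}"
  shows "x ^ card (UNIV :: 'a set) = x"
proof (cases "x = 0")
  case False
  have "x * (\<Prod>y\<in>UNIV-{0}. x * y) = x * x ^ (card (UNIV :: 'a set) - 1) * \<Prod>(UNIV-{0})"
    by (simp add: prod.distrib mult_ac)
  also have "x * x ^ (card (UNIV :: 'a set) - 1) = x ^ Suc (card (UNIV :: 'a set) - 1)"
    by (subst power_Suc) auto
  also have "Suc (card (UNIV :: 'a set) - 1) = card (UNIV :: 'a set)"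
    using finite_UNIV_card_ge_0[where ?'a = 'a] by simp
  also have "(\<Prod>y\<in>UNIV-{0}. x * y) = (\<Prod>y\<in>UNIV-{0}. y)"
    by (rule prod.reindex_bij_witness[of _ "\<lambda>y. y / x" "\<lambda>y. x * y"]) (use False in auto)
  finally show ?thesis
    by simp
qed (use finite_UNIV_card_ge_0[where ?'a = 'a] in auto)

lemma proj_pt_scale:
  fixes l x y :: "'a::field"
  assumes "l \<noteq> 0"
  shows "proj_pt (l*x, l*y) = proj_pt (x, y)"
  unfolding proj_pt_def
proof (auto, goal_cases)
  case (1 c) then show ?case using assms by (intro exI[of _ "c*l"]) auto
next
  case (2 c) then show ?case using assms by (intro exI[of _ "c/l"]) auto
qed

lemma proj_pt_H:
  fixes x :: "'a::field"
  assumes "x \<noteq> 0"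
  shows "proj_pt (x, 0) = proj_pt (1, 0)"
  using proj_pt_scale[OF assms, of 1 0] by simp

lemma proj_pt_self: "w \<in> proj_pt w"
  unfolding proj_pt_def by (intro CollectI exI[of _ 1]) auto

lemma char_setup:
  assumes "prime_power q" and card: "card (UNIV :: 'a::{field,finite} set) = q ^ n"
  shows "\<And>x y::'a. (x+y)^q = x^q + y^q"
proof -
  obtain p k where p: "prime p" "k > 0" "q = p^k" using assms(1) unfolding prime_power_def by auto
  have cpos: "CHAR('a) > 0" by (rule finite_imp_CHAR_pos) simp
  have cpr: "prime CHAR('a)" using prime_CHAR_semidom[OF cpos] .
  have "CHAR('a) dvd p^(k*n)" using CHAR_dvd_CARD[where 'a='a] card p by (simp add: power_mult)
  then have "CHAR('a) dvd p" using cpr prime_dvd_power by blast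
  then have cp: "CHAR('a) = p" using cpr p primes_dvd_imp_eq by blast
  fix x y :: 'a
  show "(x+y)^q = x^q + y^q" using freshmans_dream'[OF cpr, of q k] cp p by simp
qed




lemma alg:
  fixes a b c t s x :: "'a::field"
  assumes "c \<noteq> 0" "t \<noteq> 0" "s \<noteq> 0" "a \<noteq> 0" "b \<noteq> 0" "a * b * s = c * t"
  shows "a * (inverse t * x) - inverse s * (c * x) / b = 0"
proof -
  have "c = a * b * s / t" using assms by (simp add: field_simps)
  then show ?thesis using assms by (simp add: field_simps)
qed

theorem theorem3p4:
  fixes q n r1 r2 :: nat and a b :: "'a::{field,finite}"
  assumes "prime_power q"
    and "card (UNIV :: 'a set) = q ^ n"
    and "n \<ge> 2"
    and "r1 > 0" and "r2 > 0" and "r1 dvd n" and "r2 dvd n"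
    and "gcd r1 r2 = 1"
    and "a \<in> subfield_pow q r1" and "a \<noteq> 0"
    and "b \<in> subfield_pow q r2" and "b \<noteq> 0"
  shows "(\<exists>P. P \<in> {proj_pt (x, trace_rel q n r1 x) | x. x \<noteq> 0}
              \<and> P \<in> {proj_pt (x, (a * b) * trace_rel q n r2 x) | x. x \<noteq> 0}
              \<and> P \<noteq> proj_pt (1, 0))
     \<longleftrightarrow> (\<exists>\<gamma>1 \<gamma>2. trace_rel q n r1 \<gamma>1 = 1 \<and> trace_rel q n r2 \<gamma>2 = 1
              \<and> trace_rel q n 1 (a * \<gamma>1 - \<gamma>2 / b) = 0)"
proof -
  note pp = assms(1) and card = assms(2) and n2 = assms(3) and r1 = assms(4,6) and r2 = assms(5,7)
  have H: "\<And>x y::'a. (x+y)^q = x^q + y^q" by (rule char_setup[OF pp card])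
  have Hfix: "x^(q^n) = x" for x :: 'a
    using field_pow_card[of x] unfolding card .
  obtain p k where p: "prime p" "k > 0" "q = p^k" using pp unfolding prime_power_def by auto
  have p2: "p \<ge> 2" using p(1) by (rule prime_ge_2_nat)
  have "p \<le> p^k" using p2 p(2) by (intro self_le_power) auto
  then have q2: "q \<ge> 2" using p2 p(3) by simp
  have qpos: "q > 0" using q2 by simp
  have n1: "n \<ge> 1" using n2 by simp
  note tr_add' = tr_add[OF H Hfix qpos] and tr_diff' = tr_diff[OF H Hfix qpos]
    and tr_zero' = tr_zero[OF H Hfix qpos] and tr_scale' = tr_scale[OF H Hfix qpos]
    and tr_in_sub' = tr_in_sub[OF H Hfix qpos] and tr_frob_iter' = tr_frob_iter[OF H Hfix qpos]
  have inv_sub: "inverse l ^ (q^r) = inverse l" if "l ^ (q^r) = l" for l :: 'a and r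
    using that by (simp add: power_inverse)
  have ha: "a^(q^r1) = a" using assms(9) unfolding subfield_pow_def by simp
  have hb: "b^(q^r2) = b" using assms(11) unfolding subfield_pow_def by simp
  have norm: "trace_rel q n r (inverse (trace_rel q n r x) * x) = 1"
    if "trace_rel q n r x \<noteq> 0" "r dvd n" "r > 0" for x :: 'a and r
  proof -
    have "trace_rel q n r (inverse (trace_rel q n r x) * x) = inverse (trace_rel q n r x) * trace_rel q n r x"
      by (rule tr_scale'[OF inv_sub[OF tr_in_sub'[OF that(2,3)]]])
    then show ?thesis using that(1) by simp
  qed
  show ?thesis
  proof
    assume "\<exists>P. P \<in> {proj_pt (x, trace_rel q n r1 x) | x. x \<noteq> 0}
              \<and> P \<in> {proj_pt (x, (a * b) * trace_rel q n r2 x) | x. x \<noteq> 0}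
              \<and> P \<noteq> proj_pt (1, 0)"
    then obtain x y where x: "x \<noteq> 0" and y: "y \<noteq> 0"
      and e: "proj_pt (x, trace_rel q n r1 x) = proj_pt (y, (a * b) * trace_rel q n r2 y)"
      and nH: "proj_pt (x, trace_rel q n r1 x) \<noteq> proj_pt (1, 0)"
    proof -
      from \<open>\<exists>P. _\<close> obtain P where "P \<in> {proj_pt (x, trace_rel q n r1 x) | x. x \<noteq> 0}"
        and "P \<in> {proj_pt (x, (a * b) * trace_rel q n r2 x) | x. x \<noteq> 0}" and "P \<noteq> proj_pt (1, 0)"
        by blast
      then obtain x y where h1: "x \<noteq> 0" and h2: "P = proj_pt (x, trace_rel q n r1 x)" and h3: "y \<noteq> 0"
         and h4: "P = proj_pt (y, (a * b) * trace_rel q n r2 y)" and h5: "P \<noteq> proj_pt (1, 0)"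
        by auto
      show ?thesis
      proof (rule that[OF h1 h3])
        show "proj_pt (x, trace_rel q n r1 x) = proj_pt (y, (a * b) * trace_rel q n r2 y)"
          using h2 h4 by simp
        show "proj_pt (x, trace_rel q n r1 x) \<noteq> proj_pt (1, 0)" using h2 h5 by simp
      qed
    qed
    have "(y, (a * b) * trace_rel q n r2 y) \<in> proj_pt (x, trace_rel q n r1 x)"
      using proj_pt_self[of "(y, (a * b) * trace_rel q n r2 y)"] unfolding e[symmetric] .
    then obtain c where c: "c \<noteq> 0" "y = c * x" "(a * b) * trace_rel q n r2 y = c * trace_rel q n r1 x"
      unfolding proj_pt_def by auto
    have t1: "trace_rel q n r1 x \<noteq> 0"
    proof
      assume "trace_rel q n r1 x = 0"
      then have "proj_pt (x, trace_rel q n r1 x) = proj_pt (1, 0)" using proj_pt_H[OF x] by simp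
      then show False using nH by contradiction
    qed
    have t2: "trace_rel q n r2 y \<noteq> 0"
    proof
      assume "trace_rel q n r2 y = 0"
      then have "c * trace_rel q n r1 x = 0" using c(3) by simp
      then show False using c(1) t1 by simp
    qed
    define g1 where "g1 = inverse (trace_rel q n r1 x) * x"
    define g2 where "g2 = inverse (trace_rel q n r2 y) * y"
    have "a * g1 - g2 / b = 0"
      unfolding g1_def g2_def c(2)[symmetric]
    proof -
      have y2: "inverse (trace_rel q n r2 y) * y = inverse (trace_rel q n r2 y) * (c * x)" using c(2) by simp
      show "a * (inverse (trace_rel q n r1 x) * x) - inverse (trace_rel q n r2 y) * y / b = 0"
        unfolding y2 by (rule alg[OF c(1) t1 t2 assms(10,12) c(3)])
    qed
    then show "\<exists>\<gamma>1 \<gamma>2. trace_rel q n r1 \<gamma>1 = 1 \<and> trace_rel q n r2 \<gamma>2 = 1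
              \<and> trace_rel q n 1 (a * \<gamma>1 - \<gamma>2 / b) = 0"
    proof (intro exI conjI)
      show "trace_rel q n r1 g1 = 1" unfolding g1_def by (rule norm[OF t1 r1(2) r1(1)])
      show "trace_rel q n r2 g2 = 1" unfolding g2_def by (rule norm[OF t2 r2(2) r2(1)])
      show "trace_rel q n 1 (a * g1 - g2 / b) = 0" unfolding \<open>a * g1 - g2 / b = 0\<close> by (rule tr_zero')
    qed
  next
    assume "\<exists>\<gamma>1 \<gamma>2. trace_rel q n r1 \<gamma>1 = 1 \<and> trace_rel q n r2 \<gamma>2 = 1
              \<and> trace_rel q n 1 (a * \<gamma>1 - \<gamma>2 / b) = 0"
    then obtain g1 g2 where g1: "trace_rel q n r1 g1 = 1" and g2: "trace_rel q n r2 g2 = 1"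
      and tz: "trace_rel q n 1 (a * g1 - g2 / b) = 0" by blast
    define z where "z = a * g1 - g2 / b"
    obtain w where w: "z = w^q - w" using hilbert90[OF H Hfix q2 n1 card] tz unfolding z_def by blast
    obtain s t where st: "r1 * s = r2 * t + 1" using bezout_nat[of r1 r2] r1 assms(8) by auto
    define u where "u = w^(q^(s*r1)) - w"
    define v where "v = w^q - (w^q)^(q^(t*r2))"
    have wst: "w^(q^(s*r1)) = (w^q)^(q^(t*r2))"
    proof -
      have "(w^(q^1))^(q^(t*r2)) = w^(q^(1 + t*r2))" by (rule pow_pow)
      moreover have "s*r1 = 1 + t*r2" using st by (simp add: mult.commute)
      ultimately show ?thesis by simp
    qed
    have uv: "u + v = z" unfolding u_def v_def w wst by simp
    have Tu: "trace_rel q n r1 u = 0" unfolding u_def tr_diff' tr_frob_iter'[OF r1(2,1)] by simp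
    have Tv: "trace_rel q n r2 v = 0" unfolding v_def tr_diff' tr_frob_iter'[OF r2(2,1)] by simp
    define g1' where "g1' = g1 - inverse a * u"
    define g2' where "g2' = g2 + b * v"
    have T1: "trace_rel q n r1 g1' = 1"
      unfolding g1'_def tr_diff' tr_scale'[OF inv_sub[OF ha]] using g1 Tu by simp
    have T2: "trace_rel q n r2 g2' = 1"
      unfolding g2'_def tr_add' tr_scale'[OF hb] using g2 Tv by simp
    have rel: "g2' = (a * b) * g1'"
    proof -
      have e: "b * z = a * b * g1 - g2" using assms(12) unfolding z_def by (simp add: field_simps)
      have e2: "a * b * (g1 - inverse a * u) = a * b * g1 - b * u" using assms(10)
        by (simp add: algebra_simps)
      have "b * z = b * u + b * v" unfolding uv[symmetric] by (simp add: distrib_left)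
      then show ?thesis unfolding g1'_def g2'_def e2 using e by (simp add: algebra_simps)
    qed
    have ne1: "g1' \<noteq> 0" using T1 tr_zero' by auto
    have ab: "a * b \<noteq> 0" using assms(10,12) by simp
    have ne2: "g2' \<noteq> 0" using rel ne1 ab by simp
    define P where "P = proj_pt (g1', 1::'a)"
    have P1: "P = proj_pt (g1', trace_rel q n r1 g1')" unfolding P_def T1 ..
    have P2: "P = proj_pt (g2', (a * b) * trace_rel q n r2 g2')"
    proof -
      have "proj_pt (g2', (a * b) * trace_rel q n r2 g2') = proj_pt (a * b * g1', a * b * 1)"
        using T2 rel by simp
      also have "\<dots> = P" unfolding P_def by (rule proj_pt_scale[OF ab])
      finally show ?thesis by simp
    qed
    have P3: "P \<noteq> proj_pt (1, 0)"
    proof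
      assume "P = proj_pt (1, 0)"
      then have "(g1', 1) \<in> proj_pt (1::'a, 0)" using proj_pt_self[of "(g1', 1::'a)"] unfolding P_def by simp
      then show False unfolding proj_pt_def by auto
    qed
    show "\<exists>P. P \<in> {proj_pt (x, trace_rel q n r1 x) | x. x \<noteq> 0}
              \<and> P \<in> {proj_pt (x, (a * b) * trace_rel q n r2 x) | x. x \<noteq> 0}
              \<and> P \<noteq> proj_pt (1, 0)"
    proof (intro exI conjI)
      show "P \<in> {proj_pt (x, trace_rel q n r1 x) | x. x \<noteq> 0}" using P1 ne1 by blast
      show "P \<in> {proj_pt (x, (a * b) * trace_rel q n r2 x) | x. x \<noteq> 0}" using P2 ne2 by blast
    qed (rule P3)
  qed
qed


end
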